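(* Fix the following data: an integer $N_{\text{t}}\ge 2$, constants $\tilde P>0$, $H>0$, $y_{\min}>0$, $v_{\text{A,max}}>0$, $\Delta T>0$, $0<w_{\min}\le w_{\max}\le 1$, $\varepsilon_{\text{out}}\in(0,1)$, and a point $\hat{\mathbf q}_{n-1}\in\mathbb R^2$. Let $\breve{\mathbf q}_n=[\breve x_n,\breve y_n]^T\in\mathbb R^2$ and $w_n$ satisfy $\|\breve{\mathbf q}_n-\hat{\mathbf q}_{n-1}\|\le v_{\text{A,max}}\Delta T$, $\breve y_n\ge y_{\min}$, and $w_{\min}\le w_n\le w_{\max}$, and, for these fixed $\breve{\mathbf q}_n$ and $w_n$, let $\breve{\boldsymbol\Lambda}_n$ and $\hat{\boldsymbol\Lambda}_n$ be the associated $2\times 2$ positive-definite covariance matrices (which do not depend on $\boldsymbol\gamma_n$). Then the function $$\boldsymbol\gamma_n=[\breve\gamma_n,\hat\gamma_n]^T\;\longmapsto\;\tilde\varkappa(\breve{\mathbf q}_n,w_n,\boldsymbol\gamma_n)=\max\bigl(\zeta(\breve\gamma_n;\breve{\boldsymbol\Lambda}_n),\,\zeta(\hat\gamma_n;\hat{\boldsymbol\Lambda}_n)\bigr)-\varepsilon_{\text{out}},$$ defined on $\{\boldsymbol\gamma_n:\ \mathbf 0\prec\boldsymbol\gamma_n\prec\gamma_{\max}\mathbf 1_2\}$ with $\gamma_{\max}=\tilde P N_{\text{t}}/(y_{\min}^2+H^2)$, is monotonically nondecreasing in $\boldsymbol\gamma_n$ (with respect to the componentwise order).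
   Context: Notation: $\prec$ is componentwise strict inequality, $\mathbf 0$ and $\mathbf 1_2$ are the $2\times1$ zero and all-ones vectors, $\mathrm{erf}$ is the error function. Set $M=\frac{N_{\text{t}}\pi^2(N_{\text{t}}^2-1)}{24}$ and $r^2=\breve x_n^2+\breve y_n^2$. For $\gamma>0$ define $D(\gamma)=r^6\gamma+\breve x_n^2\breve y_n^2\tilde P M$, $Y_0=\frac{\breve x_n\breve y_n^3\tilde P M}{D(\gamma)}$, $Y_1=\frac{(\tilde P N_{\text{t}}-H^2\gamma)\,r^6}{D(\gamma)}$, $Y_2=-\frac{r^8\,(r^4\gamma^2+\tilde P M\breve y_n^2\gamma)}{D(\gamma)^2}$, and for $x\in\mathbb R$: $x_{\text U}=-\breve x_n+\sqrt{-Y_1/Y_2}$, $x_{\text L}=-\breve x_n-\sqrt{-Y_1/Y_2}$, $y_{\text U}(x)=-\breve y_n+Y_0(x+\breve x_n)+\sqrt{Y_1+Y_2(x+\breve x_n)^2}$, $y_{\text L}(x)=-\breve y_n+Y_0(x+\breve x_n)-\sqrt{Y_1+Y_2(x+\breve x_n)^2}$. For a positive-definite matrix $\boldsymbol\Lambda=\begin{bmatrix}\Lambda_{\text x}^2&\Lambda_{\text{xy}}^2\\ \Lambda_{\text{xy}}^2&\Lambda_{\text y}^2\end{bmatrix}$ define $\chi_{\text U}(x)=\frac{\Lambda_{\text x}^2 y_{\text U}(x)-\Lambda_{\text{xy}}^2 x}{\sqrt{2|\det\boldsymbol\Lambda|}\,\Lambda_{\text x}}$, $\chi_{\text L}(x)=\frac{\Lambda_{\text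 x}^2 y_{\text L}(x)-\Lambda_{\text{xy}}^2 x}{\sqrt{2|\det\boldsymbol\Lambda|}\,\Lambda_{\text x}}$, $\chi(x)=\frac{\mathrm{erf}(\chi_{\text U}(x))-\mathrm{erf}(\chi_{\text L}(x))}{2}$ if $x\in[x_{\text L},x_{\text U}]$ and $\chi(x)=0$ otherwise, and the approximated outage probability $\zeta(\gamma;\boldsymbol\Lambda)=1-\mathbb E_{x}[\chi(x)]$, where $x\sim\mathcal N(0,\Lambda_{\text x}^2)$. (In the paper, $\zeta(\breve\gamma_n;\breve{\boldsymbol\Lambda}_n)$ and $\zeta(\hat\gamma_n;\hat{\boldsymbol\Lambda}_n)$ are the approximated outage probabilities at the prediction and estimation stages; $\breve{\boldsymbol\Lambda}_n$ and $\hat{\boldsymbol\Lambda}_n$ are the position blocks (entries $(1,1),(1,3),(3,1),(3,3)$) of the EKF prediction and estimation MSE matrices, and in both stages the formulas above use the predicted position $(\breve x_n,\breve y_n)$.) *)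

theory Defs
  imports "HOL-Probability.Probability"
begin

text \<open>Constants of the approximated outage probability. The predicted position is
  (xb, yb); Nt is the number of antennas, P stands for tilde P.\<close>

definition M_const :: "nat \<Rightarrow> real" where
  "M_const Nt = real Nt * pi^2 * (real Nt ^ 2 - 1) / 24"

definition D_fun :: "nat \<Rightarrow> real \<Rightarrow> real \<Rightarrow> real \<Rightarrow> real \<Rightarrow> real" where
  "D_fun Nt P xb yb \<gamma> = (xb^2 + yb^2)^3 * \<gamma> + xb^2 * yb^2 * P * M_const Nt"

definition Y0 :: "nat \<Rightarrow> real \<Rightarrow> real \<Rightarrow> real \<Rightarrow> real \<Rightarrow> real" where
  "Y0 Nt P xb yb \<gamma> = xb * yb^3 * P * M_const Nt / D_fun Nt P xb yb \<gamma>"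

definition Y1 :: "nat \<Rightarrow> real \<Rightarrow> real \<Rightarrow> real \<Rightarrow> real \<Rightarrow> real \<Rightarrow> real" where
  "Y1 Nt P H xb yb \<gamma> = (P * real Nt - H^2 * \<gamma>) * (xb^2 + yb^2)^3 / D_fun Nt P xb yb \<gamma>"

definition Y2 :: "nat \<Rightarrow> real \<Rightarrow> real \<Rightarrow> real \<Rightarrow> real \<Rightarrow> real" where
  "Y2 Nt P xb yb \<gamma> = - ((xb^2 + yb^2)^4 * ((xb^2 + yb^2)^2 * \<gamma>^2 + P * M_const Nt * yb^2 * \<gamma>))
      / (D_fun Nt P xb yb \<gamma>)^2"

definition x_U :: "nat \<Rightarrow> real \<Rightarrow> real \<Rightarrow> real \<Rightarrow> real \<Rightarrow> real \<Rightarrow> real" where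
  "x_U Nt P H xb yb \<gamma> = - xb + sqrt (- Y1 Nt P H xb yb \<gamma> / Y2 Nt P xb yb \<gamma>)"

definition x_L :: "nat \<Rightarrow> real \<Rightarrow> real \<Rightarrow> real \<Rightarrow> real \<Rightarrow> real \<Rightarrow> real" where
  "x_L Nt P H xb yb \<gamma> = - xb - sqrt (- Y1 Nt P H xb yb \<gamma> / Y2 Nt P xb yb \<gamma>)"

definition y_U :: "nat \<Rightarrow> real \<Rightarrow> real \<Rightarrow> real \<Rightarrow> real \<Rightarrow> real \<Rightarrow> real \<Rightarrow> real" where
  "y_U Nt P H xb yb \<gamma> x = - yb + Y0 Nt P xb yb \<gamma> * (x + xb)
      + sqrt (Y1 Nt P H xb yb \<gamma> + Y2 Nt P xb yb \<gamma> * (x + xb)^2)"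

definition y_L :: "nat \<Rightarrow> real \<Rightarrow> real \<Rightarrow> real \<Rightarrow> real \<Rightarrow> real \<Rightarrow> real \<Rightarrow> real" where
  "y_L Nt P H xb yb \<gamma> x = - yb + Y0 Nt P xb yb \<gamma> * (x + xb)
      - sqrt (Y1 Nt P H xb yb \<gamma> + Y2 Nt P xb yb \<gamma> * (x + xb)^2)"

definition erf :: "real \<Rightarrow> real" where
  "erf z = 2 / sqrt pi * (LBINT t=0..z. exp (- (t^2)))"

text \<open>The 2x2 matrix Lambda = [[Lx2, Lxy2],[Lxy2, Ly2]] is given by its three entries
  Lx2 = Lambda_x^2, Lxy2 = Lambda_xy^2, Ly2 = Lambda_y^2; Lambda_x = sqrt Lx2.\<close>

definition pos_def2 :: "real \<Rightarrow> real \<Rightarrow> real \<Rightarrow> bool" where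
  "pos_def2 Lx2 Lxy2 Ly2 \<longleftrightarrow> Lx2 > 0 \<and> Lx2 * Ly2 - Lxy2^2 > 0"

definition chi_fun :: "nat \<Rightarrow> real \<Rightarrow> real \<Rightarrow> real \<Rightarrow> real \<Rightarrow> real \<Rightarrow> real \<Rightarrow> real \<Rightarrow> real \<Rightarrow> real \<Rightarrow> real" where
  "chi_fun Nt P H xb yb \<gamma> Lx2 Lxy2 Ly2 x =
     (if x_L Nt P H xb yb \<gamma> \<le> x \<and> x \<le> x_U Nt P H xb yb \<gamma> then
        (let s = sqrt (2 * \<bar>Lx2 * Ly2 - Lxy2^2\<bar>) * sqrt Lx2;
             cU = (Lx2 * y_U Nt P H xb yb \<gamma> x - Lxy2 * x) / s;
             cL = (Lx2 * y_L Nt P H xb yb \<gamma> x - Lxy2 * x) / s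
         in (erf cU - erf cL) / 2)
      else 0)"

definition zeta :: "nat \<Rightarrow> real \<Rightarrow> real \<Rightarrow> real \<Rightarrow> real \<Rightarrow> real \<Rightarrow> real \<Rightarrow> real \<Rightarrow> real \<Rightarrow> real" where
  "zeta Nt P H xb yb \<gamma> Lx2 Lxy2 Ly2 =
     1 - (LINT x|lborel. normal_density 0 (sqrt Lx2) x * chi_fun Nt P H xb yb \<gamma> Lx2 Lxy2 Ly2 x)"

end

theory Submission
  imports Defs
begin


lemma gauss_eq: "exp (- (t^2)) = sqrt pi * normal_density 0 (sqrt (1/2)) t" for t :: real
  by (simp add: normal_density_def real_sqrt_mult real_sqrt_divide power_divide)

lemma gauss_int: "integrable lborel (\<lambda>t::real. exp (- (t^2)))"
  unfolding gauss_eq by simp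

lemma gauss_ii: "interval_lebesgue_integrable lborel a b (\<lambda>t::real. exp (- (t^2)))"
  unfolding interval_lebesgue_integrable_def set_integrable_def
  using integrable_real_mult_indicator[OF _ gauss_int]
  by (auto simp: mult.commute)

lemma gauss_total: "(LINT t|lborel. exp (- (t^2::real))) = sqrt pi"
proof -
  show ?thesis unfolding gauss_eq by simp
qed

lemma gauss_Icc_nonneg: "a \<le> b \<Longrightarrow> 0 \<le> (LBINT t=ereal a..ereal b. exp (- (t^2::real)))"
  by (simp add: interval_integral_Icc set_lebesgue_integral_def)

lemma gauss_Icc_le: "a \<le> b \<Longrightarrow> (LBINT t=ereal a..ereal b. exp (- (t^2::real))) \<le> sqrt pi"
proof -
  assume ab: "a \<le> b"
  have "(LBINT t=ereal a..ereal b. exp (- (t^2::real))) = (LINT t|lborel. indicator {a..b} t *\<^sub>R exp (- (t^2::real)))"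
    using ab by (simp add: interval_integral_Icc set_lebesgue_integral_def)
  also have "\<dots> \<le> (LINT t|lborel. exp (- (t^2::real)))"
    using integral_mono[OF integrable_real_mult_indicator[OF _ gauss_int] gauss_int, of "{a..b}"]
    by (auto simp: indicator_def mult.commute)
  finally show ?thesis using gauss_total by simp
qed

lemma erf_mono: "a \<le> b \<Longrightarrow> erf a \<le> erf b"
proof -
  assume ab: "a \<le> b"
  have "(LBINT t=0..ereal a. exp (- (t^2::real))) + (LBINT t=ereal a..ereal b. exp (- (t^2::real)))
        = (LBINT t=0..ereal b. exp (- (t^2::real)))"
    by (rule interval_integral_sum) (rule gauss_ii)
  moreover have "0 \<le> (LBINT t=ereal a..ereal b. exp (- (t^2::real)))" using ab by (rule gauss_Icc_nonneg)
  ultimately show ?thesis unfolding erf_def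
    by (intro mult_left_mono) auto
qed

lemma erf_bound: "\<bar>erf z\<bar> \<le> 2"
proof -
  have "\<bar>LBINT t=0..ereal z. exp (- (t^2::real))\<bar> \<le> sqrt pi"
  proof (cases "0 \<le> z")
    case True then show ?thesis using gauss_Icc_nonneg[of 0 z] gauss_Icc_le[of 0 z] by (simp add: zero_ereal_def)
  next
    case False
    have "(LBINT t=0..ereal z. exp (- (t^2::real))) = - (LBINT t=ereal z..0. exp (- (t^2::real)))"
      by (rule interval_integral_endpoints_reverse)
    then show ?thesis using gauss_Icc_nonneg[of z 0] gauss_Icc_le[of z 0] False by (simp add: zero_ereal_def)
  qed
  then show ?thesis unfolding erf_def by (simp add: abs_mult divide_le_eq)
qed

lemma erf_meas[measurable]: "erf \<in> borel_measurable borel"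
  by (rule borel_measurable_mono) (auto simp: mono_def erf_mono)



definition Ff :: "nat \<Rightarrow> real \<Rightarrow> real \<Rightarrow> real \<Rightarrow> real \<Rightarrow> real \<Rightarrow> real \<Rightarrow> real \<Rightarrow> real" where
  "Ff Nt P H xb yb g u v = (xb^2+yb^2)^3 * g * (u^2+v^2+H^2) + P * M_const Nt * yb^2 * (xb * v - yb*u)^2
     - P * real Nt * (xb^2+yb^2)^3"

lemma D_pos: "g > 0 \<Longrightarrow> yb > 0 \<Longrightarrow> P > 0 \<Longrightarrow> M_const Nt \<ge> 0 \<Longrightarrow> D_fun Nt P xb yb g > 0"
  unfolding D_fun_def by (intro add_pos_nonneg mult_pos_pos mult_nonneg_nonneg) (auto intro: add_nonneg_pos)

lemma gen_id: "(D::real) \<noteq> 0 \<Longrightarrow> (v - A/D*u)^2 - (B/D + (-C/D^2)*u^2) = ((D * v - A*u)^2 - B*D + C*u^2)/D^2"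
  by (simp add: field_simps power2_eq_square)


lemma poly_id: "r2 = xb^2+yb^2 \<Longrightarrow> ((r2^3 * g + xb^2*yb^2*m) * v - xb*yb^3*m*u)^2 - (PN - H^2 * g) * r2^3 * (r2^3 * g + xb^2*yb^2*m) + r2^4 * (r2^2*g^2 + m*yb^2*g) * u^2
      = (r2^3 * g + xb^2*yb^2*m) * (r2^3 * g * (u^2+v^2+H^2) + m * yb^2 * (xb * v - yb*u)^2 - PN * r2^3)" for r2::real
  by algebra

lemma key:
  assumes "g > 0" "yb > 0" "P > 0" "M_const Nt \<ge> 0"
  shows "(v - Y0 Nt P xb yb g * u)^2 \<le> Y1 Nt P H xb yb g + Y2 Nt P xb yb g * u^2
     \<longleftrightarrow> Ff Nt P H xb yb g u v \<le> 0"
proof -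
  define D where "D = D_fun Nt P xb yb g"
  have D: "D > 0" using D_pos[OF assms] D_def by simp
  define r2 where "r2 = xb^2+yb^2"
  define m where "m = P * M_const Nt"
  have Dd: "D = r2^3 * g + xb^2*yb^2*m" unfolding D_def D_fun_def r2_def m_def by simp
  have "(v - Y0 Nt P xb yb g * u)^2 - (Y1 Nt P H xb yb g + Y2 Nt P xb yb g * u^2)
     = ((D * v - xb*yb^3*m*u)^2 - (P * real Nt - H^2 * g) * r2^3 * D + r2^4 * (r2^2*g^2 + m*yb^2*g) * u^2) / D^2"
  proof -
    have e0: "Y0 Nt P xb yb g = (xb*yb^3*m) / D" unfolding Y0_def D_def m_def by (simp add: mult.assoc)
    have e1: "Y1 Nt P H xb yb g = ((P * real Nt - H^2 * g) * r2^3) / D" unfolding Y1_def D_def r2_def by simp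
    have e2: "Y2 Nt P xb yb g = - (r2^4 * (r2^2*g^2 + m*yb^2*g)) / D^2" unfolding Y2_def D_def r2_def m_def
      by (simp add: mult.assoc)
    show ?thesis unfolding e0 e1 e2 using D by (intro gen_id) simp
  qed
  also have "(D * v - xb*yb^3*m*u)^2 - (P * real Nt - H^2 * g) * r2^3 * D + r2^4 * (r2^2*g^2 + m*yb^2*g) * u^2
      = D * Ff Nt P H xb yb g u v"
    unfolding Ff_def r2_def[symmetric] Dd using poly_id[OF r2_def, of g m v u "P * real Nt" H]
    by (simp add: m_def mult.assoc)
  finally have "(v - Y0 Nt P xb yb g * u)^2 - (Y1 Nt P H xb yb g + Y2 Nt P xb yb g * u^2) = Ff Nt P H xb yb g u v / D"
    using D by (simp add: power2_eq_square)
  then show ?thesis using D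
    by (smt (verit) divide_nonpos_pos divide_pos_pos)
qed



lemma Y2_neg: assumes "g > 0" "yb > 0" "P > 0" "M_const Nt \<ge> 0" shows "Y2 Nt P xb yb g < 0"
proof -
  have D: "D_fun Nt P xb yb g > 0" using D_pos[OF assms] .
  have r: "xb^2 + yb^2 > 0" using assms by (auto intro: add_nonneg_pos)
  have "(xb^2 + yb^2)^4 * ((xb^2 + yb^2)^2 * g^2 + P * M_const Nt * yb^2 * g) > 0"
    using assms r by (intro mult_pos_pos add_pos_nonneg mult_nonneg_nonneg) auto
  then show ?thesis unfolding Y2_def using D by (simp add: divide_pos_pos)
qed

lemma abs_sqrt_iff: "\<bar>a\<bar> \<le> sqrt q \<longleftrightarrow> a^2 \<le> (q::real)"
proof (cases "q \<ge> 0")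
  case True then show ?thesis by (metis abs_ge_zero real_sqrt_abs real_sqrt_le_iff sqrt_le_D)
next
  case False then show ?thesis
    by (smt (verit, ccfv_SIG) real_sqrt_less_mono real_sqrt_zero zero_le_power2)
qed

lemma neg_div_aux: "(Y::real) < 0 \<Longrightarrow> (a \<le> - B / Y) \<longleftrightarrow> 0 \<le> B + Y * a"
proof -
  assume Y: "Y < 0"
  have "- B / Y = B / (-Y)" by simp
  then show ?thesis using pos_le_divide_eq[of "-Y" a B] Y by (simp add: algebra_simps) linarith
qed

lemma range_iff:
  assumes "g > 0" "yb > 0" "P > 0" "M_const Nt \<ge> 0"
  shows "(x_L Nt P H xb yb g \<le> x \<and> x \<le> x_U Nt P H xb yb g) \<longleftrightarrow> 0 \<le> Y1 Nt P H xb yb g + Y2 Nt P xb yb g * (x+xb)^2"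
proof -
  have n: "Y2 Nt P xb yb g < 0" by (rule Y2_neg[OF assms])
  have "(x_L Nt P H xb yb g \<le> x \<and> x \<le> x_U Nt P H xb yb g) \<longleftrightarrow> \<bar>x+xb\<bar> \<le> sqrt (- Y1 Nt P H xb yb g / Y2 Nt P xb yb g)"
    unfolding x_L_def x_U_def by linarith
  also have "\<dots> \<longleftrightarrow> (x+xb)^2 \<le> - Y1 Nt P H xb yb g / Y2 Nt P xb yb g" by (rule abs_sqrt_iff)
  also have "\<dots> \<longleftrightarrow> 0 \<le> Y1 Nt P H xb yb g + Y2 Nt P xb yb g * (x+xb)^2"
    using neg_div_aux[OF n] by simp
  finally show ?thesis .
qed

lemma Ff_mono: "g1 \<le> g2 \<Longrightarrow> Ff Nt P H xb yb g1 u v \<le> Ff Nt P H xb yb g2 u v"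
  unfolding Ff_def by (intro diff_right_mono add_right_mono mult_right_mono mult_left_mono) auto

lemma ell_iff:
  assumes "0 \<le> S"
  shows "(c - sqrt S \<le> w \<and> w \<le> c + sqrt S) \<longleftrightarrow> (w - c)^2 \<le> (S::real)"
  using abs_sqrt_iff[of "w - c" S] by linarith



lemma trans_ell:
  assumes "0 < g1" "g1 \<le> g2" "yb > 0" "P > 0" "M_const Nt \<ge> 0"
    and "(w - Y0 Nt P xb yb g2 * u)^2 \<le> Y1 Nt P H xb yb g2 + Y2 Nt P xb yb g2 * u^2"
  shows "(w - Y0 Nt P xb yb g1 * u)^2 \<le> Y1 Nt P H xb yb g1 + Y2 Nt P xb yb g1 * u^2"
proof -
  have g2: "0 < g2" using assms by simp
  have "Ff Nt P H xb yb g2 u w \<le> 0" using key[OF g2 assms(3-5)] assms(6) by simp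
  then have "Ff Nt P H xb yb g1 u w \<le> 0" using Ff_mono[OF assms(2)] by (meson order_trans)
  then show ?thesis using key[OF assms(1) assms(3-5)] by simp
qed

lemma chi_nonneg:
  assumes "0 < g" "yb > 0" "P > 0" "M_const Nt \<ge> 0" "pos_def2 Lx2 Lxy2 Ly2"
  shows "0 \<le> chi_fun Nt P H xb yb g Lx2 Lxy2 Ly2 x"
proof (cases "x_L Nt P H xb yb g \<le> x \<and> x \<le> x_U Nt P H xb yb g")
  case False then show ?thesis unfolding chi_fun_def by auto
next
  case True
  define s where "s = sqrt (2 * \<bar>Lx2 * Ly2 - Lxy2^2\<bar>) * sqrt Lx2"
  have s: "s > 0" using assms(5) unfolding s_def pos_def2_def by simp
  have "0 \<le> Y1 Nt P H xb yb g + Y2 Nt P xb yb g * (x+xb)^2"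
    using True range_iff[OF assms(1-4)] by simp
  then have "y_L Nt P H xb yb g x \<le> y_U Nt P H xb yb g x" unfolding y_L_def y_U_def by simp
  then have "(Lx2 * y_L Nt P H xb yb g x - Lxy2 * x) / s \<le> (Lx2 * y_U Nt P H xb yb g x - Lxy2 * x) / s"
    using s assms(5) unfolding pos_def2_def by (intro divide_right_mono) auto
  then show ?thesis unfolding chi_fun_def Let_def s_def[symmetric] using erf_mono True by auto
qed

lemma erf_diff_bound: "\<bar>(erf a - erf b) / 2\<bar> \<le> 2"
proof -
  have "\<bar>erf a\<bar> \<le> 2" "\<bar>erf b\<bar> \<le> 2" by (rule erf_bound)+
  then show ?thesis by (auto simp: abs_le_iff field_simps)
qed

lemma chi_bound:
  shows "\<bar>chi_fun Nt P H xb yb g Lx2 Lxy2 Ly2 x\<bar> \<le> 2"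
  unfolding chi_fun_def Let_def using erf_diff_bound by simp

lemma chi_mono:
  assumes "0 < g1" "g1 \<le> g2" "yb > 0" "P > 0" "M_const Nt \<ge> 0" "pos_def2 Lx2 Lxy2 Ly2"
  shows "chi_fun Nt P H xb yb g2 Lx2 Lxy2 Ly2 x \<le> chi_fun Nt P H xb yb g1 Lx2 Lxy2 Ly2 x"
proof -
  have g2: "0 < g2" using assms by simp
  define u where "u = x + xb"
  define S1 where "S1 = Y1 Nt P H xb yb g1 + Y2 Nt P xb yb g1 * u^2"
  define S2 where "S2 = Y1 Nt P H xb yb g2 + Y2 Nt P xb yb g2 * u^2"
  define c1 where "c1 = Y0 Nt P xb yb g1 * u"
  define c2 where "c2 = Y0 Nt P xb yb g2 * u"
  define s where "s = sqrt (2 * \<bar>Lx2 * Ly2 - Lxy2^2\<bar>) * sqrt Lx2"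
  have s: "s > 0" using assms(6) unfolding s_def pos_def2_def by simp
  have L: "Lx2 > 0" using assms(6) unfolding pos_def2_def by simp
  have tr: "(w - c2)^2 \<le> S2 \<Longrightarrow> (w - c1)^2 \<le> S1" for w
    using trans_ell[OF assms(1-5), where w=w and u=u and H=H and xb=xb] unfolding S1_def S2_def c1_def c2_def by simp
  show ?thesis
  proof (cases "x_L Nt P H xb yb g2 \<le> x \<and> x \<le> x_U Nt P H xb yb g2")
    case False
    then have "chi_fun Nt P H xb yb g2 Lx2 Lxy2 Ly2 x = 0" unfolding chi_fun_def by auto
    then show ?thesis using chi_nonneg[OF assms(1,3,4,5,6)] by simp
  next
    case True
    then have S2: "0 \<le> S2" using range_iff[OF g2 assms(3-5)] unfolding S2_def u_def by simp
    have "(c2 - c1)^2 \<le> S1" using tr[of c2] S2 by simp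
    then have S1: "0 \<le> S1" by (meson order_trans zero_le_power2)
    then have R1: "x_L Nt P H xb yb g1 \<le> x \<and> x \<le> x_U Nt P H xb yb g1"
      using range_iff[OF assms(1,3-5)] unfolding S1_def u_def by simp
    have "((c2 + sqrt S2) - c1)^2 \<le> S1" using tr[of "c2 + sqrt S2"] S2 by simp
    then have up: "c2 + sqrt S2 \<le> c1 + sqrt S1" using ell_iff[OF S1, of c1 "c2 + sqrt S2"] by simp
    have "((c2 - sqrt S2) - c1)^2 \<le> S1" using tr[of "c2 - sqrt S2"] S2 by simp
    then have lo: "c1 - sqrt S1 \<le> c2 - sqrt S2" using ell_iff[OF S1, of c1 "c2 - sqrt S2"] by simp
    have yU: "y_U Nt P H xb yb g2 x \<le> y_U Nt P H xb yb g1 x"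
      using up unfolding y_U_def S1_def S2_def c1_def c2_def u_def by simp
    have yL: "y_L Nt P H xb yb g1 x \<le> y_L Nt P H xb yb g2 x"
      using lo unfolding y_L_def S1_def S2_def c1_def c2_def u_def by simp
    have eU: "erf ((Lx2 * y_U Nt P H xb yb g2 x - Lxy2 * x) / s) \<le> erf ((Lx2 * y_U Nt P H xb yb g1 x - Lxy2 * x) / s)"
      using yU s L by (intro erf_mono divide_right_mono) auto
    have eL: "erf ((Lx2 * y_L Nt P H xb yb g1 x - Lxy2 * x) / s) \<le> erf ((Lx2 * y_L Nt P H xb yb g2 x - Lxy2 * x) / s)"
      using yL s L by (intro erf_mono divide_right_mono) auto
    show ?thesis unfolding chi_fun_def Let_def s_def[symmetric] using True R1 eU eL by simp
  qed
qed



lemma chi_meas: "(\<lambda>x. chi_fun Nt P H xb yb g Lx2 Lxy2 Ly2 x) \<in> borel_measurable lborel"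
  unfolding chi_fun_def Let_def x_L_def x_U_def y_U_def y_L_def by measurable

lemma M_nonneg: "Nt \<ge> 2 \<Longrightarrow> M_const Nt \<ge> 0"
proof -
  assume "Nt \<ge> 2"
  then have "real Nt ^ 2 \<ge> 1" by (simp add: one_le_power)
  then show ?thesis unfolding M_const_def by (intro divide_nonneg_pos mult_nonneg_nonneg) auto
qed

lemma f_int: assumes "Lx2 > 0" shows "integrable lborel (\<lambda>x. normal_density 0 (sqrt Lx2) x * chi_fun Nt P H xb yb g Lx2 Lxy2 Ly2 x)"
proof (rule Bochner_Integration.integrable_bound[where M=lborel and f="\<lambda>x. 2 * normal_density 0 (sqrt Lx2) x"])
  show "integrable lborel (\<lambda>x. 2 * normal_density 0 (sqrt Lx2) x)" using integrable_normal_density[of "sqrt Lx2" 0] \<open>Lx2 > 0\<close> by simp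
  show "(\<lambda>x. normal_density 0 (sqrt Lx2) x * chi_fun Nt P H xb yb g Lx2 Lxy2 Ly2 x) \<in> borel_measurable lborel"
    using chi_meas by measurable
  show "AE x in lborel. norm (normal_density 0 (sqrt Lx2) x * chi_fun Nt P H xb yb g Lx2 Lxy2 Ly2 x)
        \<le> norm (2 * normal_density 0 (sqrt Lx2) x)"
  proof (rule AE_I2)
    fix x
    have "\<bar>normal_density 0 (sqrt Lx2) x * chi_fun Nt P H xb yb g Lx2 Lxy2 Ly2 x\<bar>
       = normal_density 0 (sqrt Lx2) x * \<bar>chi_fun Nt P H xb yb g Lx2 Lxy2 Ly2 x\<bar>" by (simp add: abs_mult)
    also have "\<dots> \<le> normal_density 0 (sqrt Lx2) x * 2" by (intro mult_left_mono chi_bound) simp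
    finally show "norm (normal_density 0 (sqrt Lx2) x * chi_fun Nt P H xb yb g Lx2 Lxy2 Ly2 x)
        \<le> norm (2 * normal_density 0 (sqrt Lx2) x)" by simp
  qed
qed

lemma zeta_mono:
  assumes "0 < g1" "g1 \<le> g2" "yb > 0" "P > 0" "M_const Nt \<ge> 0" "pos_def2 Lx2 Lxy2 Ly2"
  shows "zeta Nt P H xb yb g1 Lx2 Lxy2 Ly2 \<le> zeta Nt P H xb yb g2 Lx2 Lxy2 Ly2"
proof -
  have L: "Lx2 > 0" using assms(6) unfolding pos_def2_def by simp
  have "(LINT x|lborel. normal_density 0 (sqrt Lx2) x * chi_fun Nt P H xb yb g2 Lx2 Lxy2 Ly2 x)
     \<le> (LINT x|lborel. normal_density 0 (sqrt Lx2) x * chi_fun Nt P H xb yb g1 Lx2 Lxy2 Ly2 x)"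
    by (intro integral_mono f_int[OF L] mult_left_mono chi_mono[OF assms]) simp
  then show ?thesis unfolding zeta_def by simp
qed


theorem proposition2:
  fixes Nt :: nat
    and P H ymin vAmax dT wmin wmax eps_out :: real
    and xh yh xb yb wn :: real
    and Bx2 Bxy2 By2 Hx2 Hxy2 Hy2 :: real
  assumes "Nt \<ge> 2" and "P > 0" and "H > 0" and "ymin > 0" and "vAmax > 0" and "dT > 0"
    and "0 < wmin" and "wmin \<le> wmax" and "wmax \<le> 1"
    and "0 < eps_out" and "eps_out < 1"
    and "sqrt ((xb - xh)^2 + (yb - yh)^2) \<le> vAmax * dT"
    and "yb \<ge> ymin"
    and "wmin \<le> wn" and "wn \<le> wmax"
    and "pos_def2 Bx2 Bxy2 By2"
    and "pos_def2 Hx2 Hxy2 Hy2"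
  shows "\<forall>g1 h1 g2 h2.
     let gmax = P * real Nt / (ymin^2 + H^2);
         kappa = (\<lambda>g h. max (zeta Nt P H xb yb g Bx2 Bxy2 By2) (zeta Nt P H xb yb h Hx2 Hxy2 Hy2) - eps_out)
     in (0 < g1 \<and> g1 < gmax \<and> 0 < h1 \<and> h1 < gmax \<and> 0 < g2 \<and> g2 < gmax \<and> 0 < h2 \<and> h2 < gmax
         \<and> g1 \<le> g2 \<and> h1 \<le> h2) \<longrightarrow> kappa g1 h1 \<le> kappa g2 h2"
  proof (intro allI impI)
  fix g1 h1 g2 h2
  have M: "M_const Nt \<ge> 0" using assms(1) by (rule M_nonneg)
  have yb: "yb > 0" using assms(4,13) by simp
  have "(0 < g1 \<and> g1 < P * real Nt / (ymin^2 + H^2) \<and> 0 < h1 \<and> h1 < P * real Nt / (ymin^2 + H^2)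
     \<and> 0 < g2 \<and> g2 < P * real Nt / (ymin^2 + H^2) \<and> 0 < h2 \<and> h2 < P * real Nt / (ymin^2 + H^2)
     \<and> g1 \<le> g2 \<and> h1 \<le> h2) \<longrightarrow>
     max (zeta Nt P H xb yb g1 Bx2 Bxy2 By2) (zeta Nt P H xb yb h1 Hx2 Hxy2 Hy2) - eps_out
     \<le> max (zeta Nt P H xb yb g2 Bx2 Bxy2 By2) (zeta Nt P H xb yb h2 Hx2 Hxy2 Hy2) - eps_out"
  proof
    assume h: "0 < g1 \<and> g1 < P * real Nt / (ymin^2 + H^2) \<and> 0 < h1 \<and> h1 < P * real Nt / (ymin^2 + H^2)
     \<and> 0 < g2 \<and> g2 < P * real Nt / (ymin^2 + H^2) \<and> 0 < h2 \<and> h2 < P * real Nt / (ymin^2 + H^2)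
     \<and> g1 \<le> g2 \<and> h1 \<le> h2"
    have a: "zeta Nt P H xb yb g1 Bx2 Bxy2 By2 \<le> zeta Nt P H xb yb g2 Bx2 Bxy2 By2"
      using h by (intro zeta_mono yb assms(2) M assms(16)) auto
    have b: "zeta Nt P H xb yb h1 Hx2 Hxy2 Hy2 \<le> zeta Nt P H xb yb h2 Hx2 Hxy2 Hy2"
      using h by (intro zeta_mono yb assms(2) M assms(17)) auto
    show "max (zeta Nt P H xb yb g1 Bx2 Bxy2 By2) (zeta Nt P H xb yb h1 Hx2 Hxy2 Hy2) - eps_out
     \<le> max (zeta Nt P H xb yb g2 Bx2 Bxy2 By2) (zeta Nt P H xb yb h2 Hx2 Hxy2 Hy2) - eps_out"
      using a b by (simp add: le_max_iff_disj max_def)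
  qed
  then show "let gmax = P * real Nt / (ymin^2 + H^2);
         kappa = (\<lambda>g h. max (zeta Nt P H xb yb g Bx2 Bxy2 By2) (zeta Nt P H xb yb h Hx2 Hxy2 Hy2) - eps_out)
     in (0 < g1 \<and> g1 < gmax \<and> 0 < h1 \<and> h1 < gmax \<and> 0 < g2 \<and> g2 < gmax \<and> 0 < h2 \<and> h2 < gmax
         \<and> g1 \<le> g2 \<and> h1 \<le> h2) \<longrightarrow> kappa g1 h1 \<le> kappa g2 h2"
    unfolding Let_def .
qed

end
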